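(* Let $X,Z\in\mathbb{R}^{n\times r}$, let $\mathbf{e}=\mathrm{vec}(XX^{T}-ZZ^{T})\in\mathbb{R}^{n^{2}}$ and let $\mathbf{J}\in\mathbb{R}^{n^{2}\times nr}$ be the matrix satisfying $\mathbf{J}\,\mathrm{vec}(Y)=\mathrm{vec}(XY^{T}+YX^{T})$ for all $Y\in\mathbb{R}^{n\times r}$. If $\mathbf{J}^{\dagger}\mathbf{e}=0$, then either $XX^{T}=ZZ^{T}$ or $\sigma_{r}(X)=0$.
   Context: $\mathrm{vec}$ is the column-stacking vectorization, $\mathbf{J}^{\dagger}$ the Moore–Penrose pseudoinverse, and $\sigma_{r}(X)$ the $r$-th largest singular value of $X$. *)

theory Defs
  imports "Jordan_Normal_Form.Matrix" "Jordan_Normal_Form.Char_Poly"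
    "HOL-Computational_Algebra.Polynomial"
begin

definition vecm :: "real mat \<Rightarrow> real vec" where
  "vecm Y = vec (dim_row Y * dim_col Y) (\<lambda>t. Y $$ (t mod dim_row Y, t div dim_row Y))"

definition is_mp_pinv :: "real mat \<Rightarrow> real mat \<Rightarrow> bool" where
  "is_mp_pinv A B \<longleftrightarrow> B \<in> carrier_mat (dim_col A) (dim_row A) \<and>
     A * B * A = A \<and> B * A * B = B \<and>
     transpose_mat (A * B) = A * B \<and> transpose_mat (B * A) = B * A"

definition mp_pinv :: "real mat \<Rightarrow> real mat" where
  "mp_pinv A = (THE B. is_mp_pinv A B)"

text \<open>Singular values of an m x k matrix X, in non-increasing order: the square roots of
  the eigenvalues (with multiplicity) of X^T X, i.e. of the roots of its characteristic
  polynomial. (This list has length k; entries beyond min(m,k) are 0.)\<close>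
definition singular_values :: "real mat \<Rightarrow> real list" where
  "singular_values X = map sqrt (rev (sorted_list_of_multiset
      (proots (char_poly (transpose_mat X * X)))))"

definition sigma :: "nat \<Rightarrow> real mat \<Rightarrow> real" where
  "sigma k X = singular_values X ! (k - 1)"

end

theory Submission
  imports Defs
begin



definition ovp :: "real vec \<Rightarrow> real vec \<Rightarrow> real mat" where
  "ovp u v = mat (dim_vec u) (dim_vec v) (\<lambda>(i,j). u $ i * v $ j)"

lemma ovp_carrier[simp]: "u \<in> carrier_vec m \<Longrightarrow> v \<in> carrier_vec k \<Longrightarrow> ovp u v \<in> carrier_mat m k"
  unfolding ovp_def by auto

lemma ovp_dims[simp]: "dim_row (ovp u v) = dim_vec u" "dim_col (ovp u v) = dim_vec v"
  unfolding ovp_def by auto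

lemma transpose_ovp: "transpose_mat (ovp u v) = ovp v u"
  unfolding ovp_def by (rule eq_matI) auto

lemma mult_ovp: assumes A: "A \<in> carrier_mat m k" and x: "x \<in> carrier_vec k"
  shows "A * ovp x r = ovp (A *\<^sub>v x) r"
proof (rule eq_matI)
  fix i j assume i: "i < dim_row (ovp (A *\<^sub>v x) r)" and j: "j < dim_col (ovp (A *\<^sub>v x) r)"
  have "(A * ovp x r) $$ (i,j) = (\<Sum>l<k. A $$ (i,l) * (x $ l * r $ j))"
    using A x i j by (simp add: scalar_prod_def ovp_def atLeast0LessThan)
  also have "\<dots> = (\<Sum>l<k. A $$ (i,l) * x $ l) * r $ j"
    by (simp add: sum_distrib_right mult.assoc)
  also have "\<dots> = (A *\<^sub>v x) $ i * r $ j"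
    using A x i j by (simp add: scalar_prod_def atLeast0LessThan)
  also have "\<dots> = ovp (A *\<^sub>v x) r $$ (i,j)"
    using i j by (simp add: ovp_def)
  finally show "(A * ovp x r) $$ (i,j) = ovp (A *\<^sub>v x) r $$ (i,j)" .
qed (use A in auto)

lemma ovp_mult_vec: assumes "dim_vec s = dim_vec w"
  shows "ovp r s *\<^sub>v w = (s \<bullet> w) \<cdot>\<^sub>v r"
proof (rule eq_vecI)
  fix i assume i: "i < dim_vec ((s \<bullet> w) \<cdot>\<^sub>v r)"
  then show "(ovp r s *\<^sub>v w) $ i = ((s \<bullet> w) \<cdot>\<^sub>v r) $ i"
  proof -
    have "(ovp r s *\<^sub>v w) $ i = (\<Sum>l\<in>{0..<dim_vec w}. r $ i * s $ l * w $ l)"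
      using assms i by (simp add: ovp_def scalar_prod_def)
    also have "\<dots> = r $ i * (\<Sum>l\<in>{0..<dim_vec w}. s $ l * w $ l)"
      by (simp add: sum_distrib_left mult.assoc)
    finally show ?thesis using assms i by (simp add: scalar_prod_def)
  qed
qed simp

lemma ovp_ovp: assumes "dim_vec s = dim_vec u"
  shows "ovp r s * ovp u v = (s \<bullet> u) \<cdot>\<^sub>m ovp r v"
proof -
  have "ovp r s * ovp u v = ovp (ovp r s *\<^sub>v u) v"
    by (rule mult_ovp[of _ "dim_vec r" "dim_vec s"]) (use assms in auto)
  also have "\<dots> = (s \<bullet> u) \<cdot>\<^sub>m ovp r v" unfolding ovp_mult_vec[OF assms]
    by (rule eq_matI) (simp_all add: ovp_def)
  finally show ?thesis .
qed

lemma ovp_mult: assumes Q: "Q \<in> carrier_mat k k" and r: "r \<in> carrier_vec m" and s: "s \<in> carrier_vec k"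
  shows "ovp r s * Q = ovp r (transpose_mat Q *\<^sub>v s)"
proof -
  have "transpose_mat (ovp r s * Q) = transpose_mat Q * ovp s r"
    using Q r s by (simp add: transpose_mult[of _ m k] transpose_ovp)
  also have "\<dots> = ovp (transpose_mat Q *\<^sub>v s) r" by (rule mult_ovp) (use Q s in auto)
  finally have "transpose_mat (transpose_mat (ovp r s * Q)) = transpose_mat (ovp (transpose_mat Q *\<^sub>v s) r)"
    by simp
  then show ?thesis by (simp add: transpose_ovp)
qed

lemma ovp_zero: "ovp (0\<^sub>v m) r = 0\<^sub>m m (dim_vec r)" "ovp r (0\<^sub>v m) = 0\<^sub>m (dim_vec r) m"
  by (auto intro!: eq_matI simp: ovp_def)

lemma scalar_self_zero: assumes v: "v \<in> carrier_vec m" and "v \<bullet> v = (0::real)"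
  shows "v = 0\<^sub>v m"
proof (rule eq_vecI)
  have "(\<Sum>i\<in>{0..<m}. v $ i * v $ i) = 0" using assms by (simp add: scalar_prod_def)
  then have "\<forall>i\<in>{0..<m}. v $ i * v $ i = 0" by (subst (asm) sum_nonneg_eq_0_iff) auto
  then show "\<And>i. i < dim_vec (0\<^sub>v m) \<Longrightarrow> v $ i = 0\<^sub>v m $ i" by auto
qed (use v in auto)

lemma scalar_self_nonneg: "(v::real vec) \<bullet> v \<ge> 0"
  by (simp add: scalar_prod_def sum_nonneg)

lemma mult_unit_vec: assumes A: "(A::real mat) \<in> carrier_mat m k" and j: "j < k"
  shows "A *\<^sub>v unit_vec k j = col A j"
proof -
  have "col (A * 1\<^sub>m k) j = A *\<^sub>v col (1\<^sub>m k) j"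
    by (rule col_mult2[of A m k "1\<^sub>m k" k j]) (use A j in auto)
  then show ?thesis using A j right_mult_one_mat[OF A] by simp
qed


lemma transpose_smult_mat: "transpose_mat (k \<cdot>\<^sub>m A) = k \<cdot>\<^sub>m transpose_mat A"
  by (rule eq_matI) auto

lemma smult_smult_mat: "a \<cdot>\<^sub>m (b \<cdot>\<^sub>m A) = (a * b) \<cdot>\<^sub>m (A :: real mat)"
  by (rule eq_matI) auto

lemma smult_mat_mult_vec: "dim_vec v = dim_col A \<Longrightarrow> (k \<cdot>\<^sub>m A) *\<^sub>v v = k \<cdot>\<^sub>v (A *\<^sub>v (v :: real vec))"
  by (rule eq_vecI) (auto simp: scalar_prod_def sum_distrib_left mult_ac)

lemma proj_step:
  fixes A Q W :: "real mat"
  assumes A: "A \<in> carrier_mat m k" and j: "j < k"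
    and Q: "Q \<in> carrier_mat m m" and W: "W \<in> carrier_mat k m"
    and QT: "transpose_mat Q = Q" and QQ: "Q * Q = Q" and QAW: "Q = A * W"
    and inv: "\<forall>i<j. Q *\<^sub>v col A i = col A i"
  shows "\<exists>Q' W'. Q' \<in> carrier_mat m m \<and> W' \<in> carrier_mat k m \<and> transpose_mat Q' = Q' \<and>
     Q' * Q' = Q' \<and> Q' = A * W' \<and> (\<forall>i<Suc j. Q' *\<^sub>v col A i = col A i)"
proof -
  define a where "a = col A j"
  have a: "a \<in> carrier_vec m" using A j unfolding a_def by auto
  define x where "x = unit_vec k j - W *\<^sub>v a"
  have x: "x \<in> carrier_vec k" using W a unfolding x_def by auto
  define r where "r = A *\<^sub>v x"
  have r: "r \<in> carrier_vec m" using A x unfolding r_def by auto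
  have Qa: "Q *\<^sub>v a \<in> carrier_vec m" using Q a by auto
  have "r = A *\<^sub>v unit_vec k j - A *\<^sub>v (W *\<^sub>v a)"
    unfolding r_def x_def by (rule mult_minus_distrib_mat_vec[OF A]) (use W a in auto)
  also have "A *\<^sub>v (W *\<^sub>v a) = Q *\<^sub>v a"
    unfolding QAW by (rule assoc_mult_mat_vec[symmetric]) (use A W a in auto)
  finally have r_eq: "r = a - Q *\<^sub>v a" using mult_unit_vec[OF A j] unfolding a_def by simp
  have Qr: "Q *\<^sub>v r = 0\<^sub>v m"
  proof -
    have "Q *\<^sub>v r = Q *\<^sub>v a - Q *\<^sub>v (Q *\<^sub>v a)"
      unfolding r_eq by (rule mult_minus_distrib_mat_vec[OF Q a Qa])
    also have "Q *\<^sub>v (Q *\<^sub>v a) = Q *\<^sub>v a"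
      using assoc_mult_mat_vec[OF Q Q a] QQ by simp
    finally show ?thesis using Qa by simp
  qed
  have rQ: "r \<bullet> (Q *\<^sub>v v) = 0" if v: "v \<in> carrier_vec m" for v
  proof -
    have "r \<bullet> (Q *\<^sub>v v) = (transpose_mat Q *\<^sub>v r) \<bullet> v"
      using transpose_vec_mult_scalar[OF Q v r] by simp
    then show ?thesis using QT Qr v by simp
  qed
  show ?thesis
  proof (cases "r = 0\<^sub>v m")
    case True
    have Qaa: "Q *\<^sub>v a = a"
    proof (rule eq_vecI)
      fix i assume i: "i < dim_vec a"
      have "r $ i = 0" using True i a by simp
      moreover have "r $ i = a $ i - (Q *\<^sub>v a) $ i" unfolding r_eq using i a Qa Q by simp
      ultimately show "(Q *\<^sub>v a) $ i = a $ i" by simp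
    qed (use Qa a Q in simp)
    have "\<forall>i<Suc j. Q *\<^sub>v col A i = col A i"
      using inv Qaa unfolding a_def by (simp add: less_Suc_eq)
    then show ?thesis using Q W QT QQ QAW by blast
  next
    case False
    define c where "c = r \<bullet> r"
    have c: "c > 0" using scalar_self_zero[OF r] scalar_self_nonneg[of r] False unfolding c_def
      by force
    define d where "d = 1 / c"
    define Om where "Om = ovp r r"
    have Om: "Om \<in> carrier_mat m m" using r unfolding Om_def by auto
    define Q' where "Q' = Q + d \<cdot>\<^sub>m Om"
    define W' where "W' = W + d \<cdot>\<^sub>m ovp x r"
    have Q': "Q' \<in> carrier_mat m m" using Q Om unfolding Q'_def by auto
    have W': "W' \<in> carrier_mat k m" using W x r unfolding W'_def by auto
    have Q'T: "transpose_mat Q' = Q'"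
      unfolding Q'_def using Q Om QT by (simp add: transpose_add transpose_smult_mat Om_def transpose_ovp)
    have QO: "Q * Om = 0\<^sub>m m m"
      unfolding Om_def using mult_ovp[OF Q r, of r] Qr r by (simp add: ovp_zero)
    have OQ: "Om * Q = 0\<^sub>m m m"
      unfolding Om_def using ovp_mult[OF Q r r] Qr r QT by (simp add: ovp_zero)
    have OO: "Om * Om = c \<cdot>\<^sub>m Om"
      unfolding Om_def c_def by (rule ovp_ovp) simp
    define S where "S = d \<cdot>\<^sub>m Om"
    have S: "S \<in> carrier_mat m m" using Om unfolding S_def by auto
    have QS: "Q * S = 0\<^sub>m m m" unfolding S_def using mult_smult_distrib[OF Q Om] QO by simp
    have SQ: "S * Q = 0\<^sub>m m m" unfolding S_def using mult_smult_assoc_mat[OF Om Q] OQ by simp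
    have SS: "S * S = (d * d * c) \<cdot>\<^sub>m Om" unfolding S_def
      using mult_smult_assoc_mat[OF Om, of "d \<cdot>\<^sub>m Om" m] mult_smult_distrib[OF Om Om] OO Om
      by (simp add: smult_smult_mat mult_ac)
    have dc: "d * d * c = d" unfolding d_def using c by simp
    have "(Q + S) * (Q + S) = Q * (Q + S) + S * (Q + S)"
      by (rule add_mult_distrib_mat[OF Q S]) (use Q S in auto)
    also have "Q * (Q + S) = Q * Q + Q * S" by (rule mult_add_distrib_mat[OF Q Q S])
    also have "S * (Q + S) = S * Q + S * S" by (rule mult_add_distrib_mat[OF S Q S])
    finally have "(Q + S) * (Q + S) = Q + S" using QQ QS SQ SS dc Q S unfolding S_def by simp
    then have Q'Q': "Q' * Q' = Q'" unfolding Q'_def S_def .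
    have AW': "Q' = A * W'"
    proof -
      have "A * W' = A * W + A * (d \<cdot>\<^sub>m ovp x r)"
        unfolding W'_def by (rule mult_add_distrib_mat[OF A W]) (use x r in auto)
      also have "A * (d \<cdot>\<^sub>m ovp x r) = d \<cdot>\<^sub>m (A * ovp x r)"
        by (rule mult_smult_distrib[OF A]) (use x r in auto)
      also have "A * ovp x r = Om" unfolding Om_def r_def by (rule mult_ovp[OF A x])
      finally show ?thesis unfolding Q'_def QAW by simp
    qed
    have Q'v: "Q' *\<^sub>v v = Q *\<^sub>v v + (d * (r \<bullet> v)) \<cdot>\<^sub>v r" if v: "v \<in> carrier_vec m" for v
      unfolding Q'_def Om_def using Q r v
      by (simp add: add_mult_distrib_mat_vec[of _ m m] ovp_mult_vec smult_mat_mult_vec smult_smult_assoc)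
    have inv': "Q' *\<^sub>v col A i = col A i" if i: "i < Suc j" for i
    proof (cases "i = j")
      case True
      have ra: "r + Q *\<^sub>v a = a"
        by (rule eq_vecI) (use a Qa Q in \<open>auto simp: r_eq\<close>)
      have "r \<bullet> a = r \<bullet> (r + Q *\<^sub>v a)" using ra by simp
      also have "\<dots> = c + 0" unfolding c_def using rQ[OF a] r Qa by (simp add: scalar_prod_add_distrib[of _ m])
      finally have "Q' *\<^sub>v a = Q *\<^sub>v a + r" using Q'v[OF a] c unfolding d_def by simp
      then have "Q' *\<^sub>v a = a" using ra comm_add_vec[OF r Qa] by simp
      then show ?thesis using True unfolding a_def by simp
    next
      case False
      then have i': "i < j" using i by simp
      have ai: "col A i \<in> carrier_vec m" using A i j by auto
      have "r \<bullet> col A i = 0" using rQ[OF ai] inv i' by simp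
      moreover have "0 \<cdot>\<^sub>v r = 0\<^sub>v m" by (rule eq_vecI) (use r in auto)
      ultimately show ?thesis using Q'v[OF ai] inv i' r ai by simp
    qed
    show ?thesis using Q' W' Q'T Q'Q' AW' inv' by blast
  qed
qed




lemma proj_exists:
  fixes A :: "real mat"
  assumes A: "A \<in> carrier_mat m k"
  shows "\<exists>Q W. Q \<in> carrier_mat m m \<and> W \<in> carrier_mat k m \<and> transpose_mat Q = Q \<and>
     Q * Q = Q \<and> Q = A * W \<and> Q * A = A"
proof -
  have "\<exists>Q W. Q \<in> carrier_mat m m \<and> W \<in> carrier_mat k m \<and> transpose_mat Q = Q \<and>
     Q * Q = Q \<and> Q = A * W \<and> (\<forall>i<j. Q *\<^sub>v col A i = col A i)" if "j \<le> k" for j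
    using that
  proof (induction j)
    case 0
    show ?case
      by (intro exI[of _ "0\<^sub>m m m"] exI[of _ "0\<^sub>m k m"]) (use A in auto)
  next
    case (Suc j)
    then obtain Q W where "Q \<in> carrier_mat m m" "W \<in> carrier_mat k m" "transpose_mat Q = Q"
      "Q * Q = Q" "Q = A * W" "\<forall>i<j. Q *\<^sub>v col A i = col A i" by auto
    then show ?case using proj_step[OF A] Suc(2) by simp
  qed
  then obtain Q W where Q: "Q \<in> carrier_mat m m" "W \<in> carrier_mat k m" "transpose_mat Q = Q"
      "Q * Q = Q" "Q = A * W" and inv: "\<forall>i<k. Q *\<^sub>v col A i = col A i" by blast
  have "Q * A = A"
  proof (rule mat_col_eqI)
    fix i assume "i < dim_col A"
    then have i: "i < k" using A by simp
    have "col (Q * A) i = Q *\<^sub>v col A i" by (rule col_mult2[OF Q(1) A i])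
    then show "col (Q * A) i = col A i" using inv i by simp
  qed (use A Q in auto)
  then show ?thesis using Q by blast
qed

lemma mp_exists:
  fixes A :: "real mat"
  assumes A: "A \<in> carrier_mat m k"
  shows "\<exists>B. is_mp_pinv A B"
proof -
  obtain Q W where Q: "Q \<in> carrier_mat m m" and W: "W \<in> carrier_mat k m" and QT: "transpose_mat Q = Q"
    and QQ: "Q * Q = Q" and QAW: "Q = A * W" and QA: "Q * A = A"
    using proj_exists[OF A] by blast
  have AT: "transpose_mat A \<in> carrier_mat k m" using A by auto
  obtain R V where R: "R \<in> carrier_mat k k" and V: "V \<in> carrier_mat m k" and RT: "transpose_mat R = R"
    and RR: "R * R = R" and RAV: "R = transpose_mat A * V" and RA: "R * transpose_mat A = transpose_mat A"
    using proj_exists[OF AT] by blast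
  have WAQ: "A * W = Q" using QAW by simp
  define B where "B = R * W * Q"
  have B: "B \<in> carrier_mat k m" unfolding B_def using R W Q by auto
  have AR: "A * R = A"
  proof -
    have "transpose_mat (A * R) = transpose_mat R * transpose_mat A" using transpose_mult[OF A R] .
    also have "\<dots> = transpose_mat A" using RT RA by simp
    finally show ?thesis by (metis transpose_transpose)
  qed
  have RVA: "R = transpose_mat V * A"
  proof -
    have "transpose_mat R = transpose_mat V * A" unfolding RAV using transpose_mult[OF AT V] by simp
    then show ?thesis using RT by simp
  qed
  have AWA: "A * W * A = A" using WAQ QA by simp
  have AB: "A * B = Q"
  proof -
    have RW: "R * W \<in> carrier_mat k m" using R W by auto
    have "A * B = A * (R * W) * Q" unfolding B_def using assoc_mult_mat[OF A RW Q] by simp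
    also have "A * (R * W) = A * R * W" using assoc_mult_mat[OF A R W] by simp
    also have "\<dots> = Q * Q" using AR WAQ QQ by simp
    finally show ?thesis using QQ by simp
  qed
  have RWA: "R * W * A = R"
  proof -
    have VT: "transpose_mat V \<in> carrier_mat k m" using V by auto
    have AW: "A * W \<in> carrier_mat m m" using A W by auto
    have "R * W * A = transpose_mat V * A * W * A" unfolding RVA ..
    also have "transpose_mat V * A * W = transpose_mat V * (A * W)" using assoc_mult_mat[OF VT A W] .
    also have "transpose_mat V * (A * W) * A = transpose_mat V * (A * W * A)" using assoc_mult_mat[OF VT AW A] .
    finally have "R * W * A = transpose_mat V * (A * W * A)" .
    then show ?thesis using AWA RVA by simp
  qed
  have BA: "B * A = R"
  proof -
    have RW: "R * W \<in> carrier_mat k m" using R W by auto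
    have "B * A = R * W * (Q * A)" unfolding B_def using assoc_mult_mat[OF RW Q A] .
    then show ?thesis using QA RWA by simp
  qed
  have ABA: "A * B * A = A" using AB QA by simp
  have BAB: "B * A * B = B"
  proof -
    have "B * A * B = R * B" using BA by simp
    also have "\<dots> = R * (R * W) * Q" unfolding B_def using R W Q
      using assoc_mult_mat[OF R, of "R * W" m Q m] by auto
    also have "R * (R * W) = R * R * W" using assoc_mult_mat[OF R R W] by simp
    finally show ?thesis using RR unfolding B_def by simp
  qed
  show ?thesis unfolding is_mp_pinv_def
    by (intro exI[of _ B]) (use A B ABA BAB AB BA QT RT in auto)
qed




lemma mp_unique:
  fixes A B1 B2 :: "real mat"
  assumes A: "A \<in> carrier_mat m k" and h1: "is_mp_pinv A B1" and h2: "is_mp_pinv A B2"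
  shows "B1 = B2"
proof -
  have B1: "B1 \<in> carrier_mat k m" and ABA1: "A * B1 * A = A" and BAB1: "B1 * A * B1 = B1"
    and T1: "transpose_mat (A * B1) = A * B1" and T1': "transpose_mat (B1 * A) = B1 * A"
    using h1 A unfolding is_mp_pinv_def by auto
  have B2: "B2 \<in> carrier_mat k m" and ABA2: "A * B2 * A = A" and BAB2: "B2 * A * B2 = B2"
    and T2: "transpose_mat (A * B2) = A * B2" and T2': "transpose_mat (B2 * A) = B2 * A"
    using h2 A unfolding is_mp_pinv_def by auto
  have AT: "transpose_mat A \<in> carrier_mat k m" using A by auto
  have B1T: "transpose_mat B1 \<in> carrier_mat m k" using B1 by auto
  have B2T: "transpose_mat B2 \<in> carrier_mat m k" using B2 by auto
  have AB1: "A * B1 \<in> carrier_mat m m" using A B1 by auto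
  have AB2: "A * B2 \<in> carrier_mat m m" using A B2 by auto
  have B1A: "B1 * A \<in> carrier_mat k k" using A B1 by auto
  have B2A: "B2 * A \<in> carrier_mat k k" using A B2 by auto
  have a: "transpose_mat A = transpose_mat A * A * B2"
  proof -
    have "transpose_mat A = transpose_mat (A * B2 * A)" using ABA2 by simp
    also have "\<dots> = transpose_mat A * transpose_mat (A * B2)" by (rule transpose_mult[OF AB2 A])
    also have "\<dots> = transpose_mat A * (A * B2)" using T2 by simp
    also have "\<dots> = transpose_mat A * A * B2" using assoc_mult_mat[OF AT A B2] by simp
    finally show ?thesis .
  qed
  have b: "B1 = B1 * transpose_mat B1 * transpose_mat A"
  proof -
    have "B1 = B1 * (A * B1)" using BAB1 assoc_mult_mat[OF B1 A B1] by simp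
    also have "\<dots> = B1 * transpose_mat (A * B1)" using T1 by simp
    also have "\<dots> = B1 * (transpose_mat B1 * transpose_mat A)" using transpose_mult[OF A B1] by simp
    also have "\<dots> = B1 * transpose_mat B1 * transpose_mat A" using assoc_mult_mat[OF B1 B1T AT] by simp
    finally show ?thesis .
  qed
  have X: "B1 * transpose_mat B1 \<in> carrier_mat k k" using B1 by auto
  have ATA: "transpose_mat A * A \<in> carrier_mat k k" using A by auto
  have c: "B1 = B1 * A * B2"
  proof -
    have "B1 = B1 * transpose_mat B1 * (transpose_mat A * A * B2)" using b a by simp
    also have "\<dots> = B1 * transpose_mat B1 * (transpose_mat A * A) * B2"
      using assoc_mult_mat[OF X ATA B2] by simp
    also have "B1 * transpose_mat B1 * (transpose_mat A * A) = B1 * transpose_mat B1 * transpose_mat A * A"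
      using assoc_mult_mat[OF X AT A] by simp
    finally show ?thesis using b by simp
  qed
  have a': "transpose_mat A = B1 * A * transpose_mat A"
  proof -
    have "transpose_mat A = transpose_mat (A * (B1 * A))" using ABA1 assoc_mult_mat[OF A B1 A] by simp
    also have "\<dots> = transpose_mat (B1 * A) * transpose_mat A" by (rule transpose_mult[OF A B1A])
    finally show ?thesis using T1' by simp
  qed
  have b': "B2 = transpose_mat A * transpose_mat B2 * B2"
  proof -
    have "B2 = transpose_mat (B2 * A) * B2" using BAB2 T2' by simp
    also have "\<dots> = transpose_mat A * transpose_mat B2 * B2" using transpose_mult[OF B2 A] by simp
    finally show ?thesis .
  qed
  have Y: "transpose_mat B2 * B2 \<in> carrier_mat m m" using B2 by auto
  have d: "B2 = B1 * A * B2"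
  proof -
    have "B2 = transpose_mat A * (transpose_mat B2 * B2)" using b' assoc_mult_mat[OF AT B2T B2] by simp
    also have "\<dots> = B1 * A * transpose_mat A * (transpose_mat B2 * B2)" using a' by simp
    also have "\<dots> = B1 * A * (transpose_mat A * (transpose_mat B2 * B2))"
      using assoc_mult_mat[OF B1A AT Y] by simp
    also have "transpose_mat A * (transpose_mat B2 * B2) = B2" using b' assoc_mult_mat[OF AT B2T B2] by simp
    finally show ?thesis .
  qed
  show ?thesis using c d by simp
qed

lemma mp_pinv_is:
  fixes A :: "real mat"
  assumes A: "A \<in> carrier_mat m k"
  shows "is_mp_pinv A (mp_pinv A)"
proof -
  obtain B where B: "is_mp_pinv A B" using mp_exists[OF A] by blast
  show ?thesis unfolding mp_pinv_def
    by (rule theI[of "is_mp_pinv A", OF B]) (use mp_unique[OF A B] in auto)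
qed

lemma mat_vec_zero: "(A :: real mat) \<in> carrier_mat m k \<Longrightarrow> A *\<^sub>v 0\<^sub>v k = 0\<^sub>v m"
  by (rule eq_vecI) (auto simp: scalar_prod_def)

lemma mp_null:
  fixes A :: "real mat"
  assumes A: "A \<in> carrier_mat m k" and v: "v \<in> carrier_vec m"
    and z: "mp_pinv A *\<^sub>v v = 0\<^sub>v k"
  shows "transpose_mat A *\<^sub>v v = 0\<^sub>v k"
proof -
  define B where "B = mp_pinv A"
  have h: "is_mp_pinv A B" using mp_pinv_is[OF A] unfolding B_def .
  have B: "B \<in> carrier_mat k m" and ABA: "A * B * A = A" and T: "transpose_mat (A * B) = A * B"
    using h A unfolding is_mp_pinv_def by auto
  have AT: "transpose_mat A \<in> carrier_mat k m" using A by auto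
  have AB: "A * B \<in> carrier_mat m m" using A B by auto
  have "transpose_mat A = transpose_mat (A * B * A)" using ABA by simp
  also have "\<dots> = transpose_mat A * transpose_mat (A * B)" by (rule transpose_mult[OF AB A])
  also have "\<dots> = transpose_mat A * (A * B)" using T by simp
  finally have eq: "transpose_mat A = transpose_mat A * (A * B)" .
  have "transpose_mat A *\<^sub>v v = transpose_mat A * (A * B) *\<^sub>v v" using eq by simp
  also have "\<dots> = transpose_mat A *\<^sub>v (A *\<^sub>v (B *\<^sub>v v))"
    using assoc_mult_mat_vec[OF AT AB v] assoc_mult_mat_vec[OF A B v] by simp
  also have "B *\<^sub>v v = 0\<^sub>v k" using z unfolding B_def .
  finally show ?thesis using mat_vec_zero[OF A] mat_vec_zero[OF AT] by simp
qed




lemma sum_mod_div: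
  fixes f :: "nat \<Rightarrow> nat \<Rightarrow> real"
  shows "(\<Sum>t\<in>{0..<n*m}. f (t mod n) (t div n)) = (\<Sum>j\<in>{0..<m}. \<Sum>i\<in>{0..<n}. f i j)"
proof (induction m)
  case 0 then show ?case by simp
next
  case (Suc m)
  have "(\<Sum>t\<in>{0..<n*Suc m}. f (t mod n) (t div n)) =
        (\<Sum>t\<in>{0..<n*m}. f (t mod n) (t div n)) + (\<Sum>t\<in>{n*m..<n*Suc m}. f (t mod n) (t div n))"
    by (rule sum.atLeastLessThan_concat[symmetric]) auto
  also have "(\<Sum>t\<in>{n*m..<n*Suc m}. f (t mod n) (t div n)) = (\<Sum>i\<in>{0..<n}. f i m)"
  proof -
    have "{n*m..<n*Suc m} = {0 + n*m..<n + n*m}" by (simp add: add.commute)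
    then have "(\<Sum>t\<in>{n*m..<n*Suc m}. f (t mod n) (t div n)) = (\<Sum>i\<in>{0..<n}. f ((i + n*m) mod n) ((i + n*m) div n))"
      using sum.shift_bounds_nat_ivl[of "\<lambda>t. f (t mod n) (t div n)" 0 "n*m" n] by simp
    also have "\<dots> = (\<Sum>i\<in>{0..<n}. f i m)"
      by (rule sum.cong) auto
    finally show ?thesis .
  qed
  finally show ?case using Suc by simp
qed

lemma vecm_carrier: "Y \<in> carrier_mat n m \<Longrightarrow> vecm Y \<in> carrier_vec (n * m)"
  unfolding vecm_def by auto

lemma vecm_scalar:
  assumes A: "A \<in> carrier_mat n m" and B: "B \<in> carrier_mat n m"
  shows "vecm A \<bullet> vecm B = (\<Sum>i\<in>{0..<n}. \<Sum>j\<in>{0..<m}. A $$ (i,j) * B $$ (i,j))"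
proof -
  have "vecm A \<bullet> vecm B = (\<Sum>t\<in>{0..<n*m}. A $$ (t mod n, t div n) * B $$ (t mod n, t div n))"
    using A B unfolding vecm_def scalar_prod_def by auto
  also have "\<dots> = (\<Sum>j\<in>{0..<m}. \<Sum>i\<in>{0..<n}. A $$ (i,j) * B $$ (i,j))"
    by (rule sum_mod_div)
  also have "\<dots> = (\<Sum>i\<in>{0..<n}. \<Sum>j\<in>{0..<m}. A $$ (i,j) * B $$ (i,j))"
    by (rule sum.swap)
  finally show ?thesis .
qed

lemma frob_key:
  fixes E X :: "real mat"
  assumes E: "E \<in> carrier_mat n n" and X: "X \<in> carrier_mat n r"
    and Esym: "transpose_mat E = E"
  defines "Y \<equiv> E * X"
  shows "vecm E \<bullet> vecm (X * transpose_mat Y + Y * transpose_mat X) =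
         2 * (\<Sum>i\<in>{0..<n}. \<Sum>l\<in>{0..<r}. Y $$ (i,l) * Y $$ (i,l))"
proof -
  have Y: "Y \<in> carrier_mat n r" using E X unfolding Y_def by auto
  have Es: "E $$ (i,j) = E $$ (j,i)" if "i < n" "j < n" for i j
    using arg_cong[OF Esym, of "\<lambda>M. M $$ (j,i)"] that E by auto
  have Yij: "Y $$ (i,l) = (\<Sum>j\<in>{0..<n}. E $$ (i,j) * X $$ (j,l))" if "i < n" "l < r" for i l
    using that E X unfolding Y_def by (simp add: scalar_prod_def)
  have S: "X * transpose_mat Y + Y * transpose_mat X \<in> carrier_mat n n" using X Y by auto
  define T2 where "T2 = (\<Sum>i\<in>{0..<n}. \<Sum>j\<in>{0..<n}. E $$ (i,j) * (\<Sum>l\<in>{0..<r}. Y $$ (i,l) * X $$ (j,l)))"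
  define T1 where "T1 = (\<Sum>i\<in>{0..<n}. \<Sum>j\<in>{0..<n}. E $$ (i,j) * (\<Sum>l\<in>{0..<r}. X $$ (i,l) * Y $$ (j,l)))"
  have "vecm E \<bullet> vecm (X * transpose_mat Y + Y * transpose_mat X) =
     (\<Sum>i\<in>{0..<n}. \<Sum>j\<in>{0..<n}. E $$ (i,j) * ((\<Sum>l\<in>{0..<r}. X $$ (i,l) * Y $$ (j,l)) + (\<Sum>l\<in>{0..<r}. Y $$ (i,l) * X $$ (j,l))))"
    unfolding vecm_scalar[OF E S]
    by (rule sum.cong[OF refl], rule sum.cong[OF refl]) (use X Y in \<open>simp add: scalar_prod_def\<close>)
  also have "\<dots> = T1 + T2" unfolding T1_def T2_def
    by (simp add: distrib_left sum.distrib)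
  finally have eq: "vecm E \<bullet> vecm (X * transpose_mat Y + Y * transpose_mat X) = T1 + T2" .
  have T12: "T1 = T2"
  proof -
    have "T1 = (\<Sum>j\<in>{0..<n}. \<Sum>i\<in>{0..<n}. E $$ (i,j) * (\<Sum>l\<in>{0..<r}. X $$ (i,l) * Y $$ (j,l)))"
      unfolding T1_def by (rule sum.swap)
    also have "\<dots> = T2" unfolding T2_def
      by (rule sum.cong[OF refl], rule sum.cong[OF refl]) (auto simp: Es mult.commute)
    finally show ?thesis .
  qed
  have T2': "T2 = (\<Sum>i\<in>{0..<n}. \<Sum>l\<in>{0..<r}. Y $$ (i,l) * Y $$ (i,l))"
    unfolding T2_def
  proof (rule sum.cong[OF refl])
    fix i assume i: "i \<in> {0..<n}"
    have "(\<Sum>j\<in>{0..<n}. E $$ (i,j) * (\<Sum>l\<in>{0..<r}. Y $$ (i,l) * X $$ (j,l))) =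
          (\<Sum>j\<in>{0..<n}. \<Sum>l\<in>{0..<r}. Y $$ (i,l) * (E $$ (i,j) * X $$ (j,l)))"
      by (simp add: sum_distrib_left mult_ac)
    also have "\<dots> = (\<Sum>l\<in>{0..<r}. \<Sum>j\<in>{0..<n}. Y $$ (i,l) * (E $$ (i,j) * X $$ (j,l)))"
      by (rule sum.swap)
    also have "\<dots> = (\<Sum>l\<in>{0..<r}. Y $$ (i,l) * Y $$ (i,l))"
      by (rule sum.cong[OF refl]) (use i in \<open>simp add: Yij sum_distrib_left\<close>)
    finally show "(\<Sum>j\<in>{0..<n}. E $$ (i,j) * (\<Sum>l\<in>{0..<r}. Y $$ (i,l) * X $$ (j,l))) =
          (\<Sum>l\<in>{0..<r}. Y $$ (i,l) * Y $$ (i,l))" .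
  qed
  show ?thesis using eq T12 T2' by simp
qed

lemma sumsq_zero_mat:
  fixes Y :: "real mat"
  assumes Y: "Y \<in> carrier_mat n r" and z: "(\<Sum>i\<in>{0..<n}. \<Sum>l\<in>{0..<r}. Y $$ (i,l) * Y $$ (i,l)) = 0"
  shows "Y = 0\<^sub>m n r"
proof (rule eq_matI)
  fix i j assume i: "i < dim_row (0\<^sub>m n r)" and j: "j < dim_col (0\<^sub>m n r)"
  have nn: "\<forall>i\<in>{0..<n}. (\<Sum>l\<in>{0..<r}. Y $$ (i,l) * Y $$ (i,l)) = 0"
    using z by (subst (asm) sum_nonneg_eq_0_iff) (auto intro: sum_nonneg)
  then have "(\<Sum>l\<in>{0..<r}. Y $$ (i,l) * Y $$ (i,l)) = 0" using i by auto
  then have "\<forall>l\<in>{0..<r}. Y $$ (i,l) * Y $$ (i,l) = 0"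
    by (subst (asm) sum_nonneg_eq_0_iff) auto
  then show "Y $$ (i,j) = 0\<^sub>m n r $$ (i,j)" using i j by auto
qed (use Y in auto)




lemma det_inv_exists:
  fixes A :: "real mat"
  assumes A: "A \<in> carrier_mat n n" and d: "det A \<noteq> 0"
  shows "\<exists>B \<in> carrier_mat n n. A * B = 1\<^sub>m n \<and> B * A = 1\<^sub>m n"
proof -
  have "A \<in> Units (ring_mat TYPE(real) n undefined)" by (rule det_non_zero_imp_unit[OF A d])
  then show ?thesis unfolding Units_def by (auto simp: ring_mat_simps)
qed

lemma mat_diff_zero:
  fixes A B :: "real mat"
  assumes A: "A \<in> carrier_mat n m" and B: "B \<in> carrier_mat n m" and z: "A - B = 0\<^sub>m n m"
  shows "A = B"
proof (rule eq_matI)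
  fix i j assume i: "i < dim_row B" and j: "j < dim_col B"
  have "(A - B) $$ (i,j) = 0" using z i j B by simp
  then show "A $$ (i,j) = B $$ (i,j)" using i j A B by simp
qed (use A B in auto)

lemma fullrank_eq:
  fixes X Z :: "real mat"
  assumes X: "X \<in> carrier_mat n r" and Z: "Z \<in> carrier_mat n r"
    and EX: "(X * transpose_mat X - Z * transpose_mat Z) * X = 0\<^sub>m n r"
    and dG: "det (transpose_mat X * X) \<noteq> 0"
  shows "X * transpose_mat X = Z * transpose_mat Z"
proof -
  have XT: "transpose_mat X \<in> carrier_mat r n" using X by auto
  have ZT: "transpose_mat Z \<in> carrier_mat r n" using Z by auto
  define G where "G = transpose_mat X * X"
  define K where "K = transpose_mat Z * X"
  have G: "G \<in> carrier_mat r r" using X unfolding G_def by auto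
  have K: "K \<in> carrier_mat r r" using X Z unfolding K_def by auto
  have GT: "transpose_mat G = G" unfolding G_def using transpose_mult[OF XT X] by simp
  have XXT: "X * transpose_mat X \<in> carrier_mat n n" using X by auto
  have ZZT: "Z * transpose_mat Z \<in> carrier_mat n n" using Z by auto
  have "X * transpose_mat X * X - Z * transpose_mat Z * X = 0\<^sub>m n r"
    using EX minus_mult_distrib_mat[OF XXT ZZT X] by simp
  then have e1: "X * transpose_mat X * X = Z * transpose_mat Z * X"
    by (rule mat_diff_zero[rotated 2]) (use X Z in auto)
  have XG: "X * transpose_mat X * X = X * G" unfolding G_def using assoc_mult_mat[OF X XT X] .
  have ZK: "Z * transpose_mat Z * X = Z * K" unfolding K_def using assoc_mult_mat[OF Z ZT X] .
  have e2: "Z * K = X * G" using e1 XG ZK by simp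
  have KT: "transpose_mat K = transpose_mat X * Z" unfolding K_def using transpose_mult[OF ZT X] by simp
  have e3: "transpose_mat K * K = G * G"
  proof -
    have "transpose_mat K * K = transpose_mat X * Z * K" using KT by simp
    also have "\<dots> = transpose_mat X * (Z * K)" using assoc_mult_mat[OF XT Z K] .
    also have "\<dots> = transpose_mat X * (X * G)" using e2 by simp
    also have "\<dots> = G * G" unfolding G_def using assoc_mult_mat[OF XT X G[unfolded G_def]] by simp
    finally show ?thesis .
  qed
  have "det (transpose_mat K * K) = det K * det K"
    using det_mult[of "transpose_mat K" r K] det_transpose[OF K] K by simp
  moreover have "det (G * G) \<noteq> 0" using det_mult[OF G G] dG unfolding G_def by simp
  ultimately have dK: "det K \<noteq> 0" using e3 by auto
  obtain Ki where Ki: "Ki \<in> carrier_mat r r" and KKi: "K * Ki = 1\<^sub>m r" and KiK: "Ki * K = 1\<^sub>m r"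
    using det_inv_exists[OF K dK] by blast
  define U where "U = G * Ki"
  have U: "U \<in> carrier_mat r r" unfolding U_def using G Ki by auto
  have UT: "transpose_mat U = transpose_mat Ki * G" unfolding U_def using transpose_mult[OF G Ki] GT by simp
  have KiT: "transpose_mat Ki \<in> carrier_mat r r" using Ki by auto
  have Zeq: "Z = X * U"
  proof -
    have "Z = Z * (K * Ki)" using KKi Z by simp
    also have "\<dots> = Z * K * Ki" using assoc_mult_mat[OF Z K Ki] by simp
    also have "\<dots> = X * G * Ki" using e2 by simp
    also have "\<dots> = X * U" unfolding U_def using assoc_mult_mat[OF X G Ki] .
    finally show ?thesis .
  qed
  have UTU: "transpose_mat U * U = 1\<^sub>m r"
  proof -
    have "transpose_mat U * U = transpose_mat Ki * G * (G * Ki)" using UT unfolding U_def by simp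
    also have "\<dots> = transpose_mat Ki * (G * (G * Ki))" using assoc_mult_mat[OF KiT G, of "G * Ki" r] G Ki by auto
    also have "G * (G * Ki) = G * G * Ki" using assoc_mult_mat[OF G G Ki] by simp
    also have "\<dots> = transpose_mat K * K * Ki" using e3 by simp
    also have "\<dots> = transpose_mat K * (K * Ki)" using assoc_mult_mat[OF _ K Ki, of "transpose_mat K" r] K by auto
    also have "\<dots> = transpose_mat K" using KKi K by simp
    also have "transpose_mat Ki * transpose_mat K = transpose_mat (K * Ki)" using transpose_mult[OF K Ki] by simp
    also have "\<dots> = 1\<^sub>m r" using KKi by simp
    finally show ?thesis .
  qed
  have UUT: "U * transpose_mat U = 1\<^sub>m r"
    by (rule mat_mult_left_right_inverse[of "transpose_mat U" r U, OF _ U UTU]) (use U in auto)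
  have "Z * transpose_mat Z = X * U * (transpose_mat U * transpose_mat X)"
    unfolding Zeq using transpose_mult[OF X U] by simp
  also have "\<dots> = X * U * transpose_mat U * transpose_mat X"
    using assoc_mult_mat[of "X * U" n r "transpose_mat U" r "transpose_mat X" n] X U by auto
  also have "X * U * transpose_mat U = X * (U * transpose_mat U)"
    using assoc_mult_mat[OF X U, of "transpose_mat U" r] U by auto
  also have "\<dots> = X" using UUT X by simp
  finally show ?thesis by simp
qed




lemma sym_eig_real:
  fixes G :: "real mat"
  assumes G: "G \<in> carrier_mat r r" and Gs: "transpose_mat G = G"
    and ev: "eigenvalue (map_mat complex_of_real G) a"
  shows "cnj a = a"
proof -
  let ?Gc = "map_mat complex_of_real G"
  obtain v where v: "v \<in> carrier_vec r" and v0: "v \<noteq> 0\<^sub>v r" and Gv: "?Gc *\<^sub>v v = a \<cdot>\<^sub>v v"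
    using ev G unfolding eigenvalue_def eigenvector_def by auto
  have Es: "G $$ (i,j) = G $$ (j,i)" if "i < r" "j < r" for i j
    using arg_cong[OF Gs, of "\<lambda>M. M $$ (j,i)"] that G by auto
  define s where "s = (\<Sum>i\<in>{0..<r}. cnj (v $ i) * (?Gc *\<^sub>v v) $ i)"
  define N where "N = (\<Sum>i\<in>{0..<r}. cnj (v $ i) * v $ i)"
  have s1: "s = a * N" unfolding s_def N_def Gv using v
    by (simp add: sum_distrib_left mult_ac)
  have s2: "s = (\<Sum>i\<in>{0..<r}. \<Sum>j\<in>{0..<r}. cnj (v $ i) * of_real (G $$ (i,j)) * v $ j)"
    unfolding s_def using v G by (simp add: scalar_prod_def sum_distrib_left mult_ac)
  have "cnj s = (\<Sum>i\<in>{0..<r}. \<Sum>j\<in>{0..<r}. v $ i * of_real (G $$ (i,j)) * cnj (v $ j))"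
    unfolding s2 by (simp add: cnj_sum)
  also have "\<dots> = (\<Sum>j\<in>{0..<r}. \<Sum>i\<in>{0..<r}. v $ i * of_real (G $$ (i,j)) * cnj (v $ j))"
    by (rule sum.swap)
  also have "\<dots> = s" unfolding s2
    by (rule sum.cong[OF refl], rule sum.cong[OF refl]) (auto simp: Es mult_ac)
  finally have cs: "cnj s = s" .
  have Nre: "N = of_real (\<Sum>i\<in>{0..<r}. (cmod (v $ i))\<^sup>2)"
    unfolding N_def of_real_sum
    by (rule sum.cong[OF refl], subst complex_norm_square, simp add: mult.commute)
  have Npos: "(\<Sum>i\<in>{0..<r}. (cmod (v $ i))\<^sup>2) \<noteq> 0"
  proof
    assume "(\<Sum>i\<in>{0..<r}. (cmod (v $ i))\<^sup>2) = 0"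
    then have "\<forall>i\<in>{0..<r}. (cmod (v $ i))\<^sup>2 = 0" by (subst (asm) sum_nonneg_eq_0_iff) auto
    then have "v = 0\<^sub>v r" using v by (intro eq_vecI) auto
    then show False using v0 by simp
  qed
  have N0: "N \<noteq> 0" unfolding Nre of_real_eq_0_iff by (rule Npos)
  have cN: "cnj N = N" using Nre by simp
  have "a = s / N" using s1 N0 by simp
  then show ?thesis using cs cN by simp
qed

lemma sym_char_poly_split:
  fixes G :: "real mat"
  assumes G: "G \<in> carrier_mat r r" and Gs: "transpose_mat G = G"
  shows "\<exists>es. char_poly G = (\<Prod>e\<leftarrow>es. [:- e, 1:]) \<and> length es = r"
proof -
  let ?Gc = "map_mat complex_of_real G"
  have Gc: "?Gc \<in> carrier_mat r r" using G by auto
  obtain as where cp: "char_poly ?Gc = (\<Prod>a\<leftarrow>as. [:- a, 1:])" and len: "length as = r"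
    using char_poly_factorized[OF Gc] by blast
  have real: "of_real (Re a) = a" if "a \<in> set as" for a
  proof -
    have "poly (char_poly ?Gc) a = 0" unfolding cp using that by (rule linear_poly_root)
    then have "eigenvalue ?Gc a" using eigenvalue_root_char_poly[OF Gc] by simp
    then have "cnj a = a" by (rule sym_eig_real[OF G Gs])
    then show ?thesis by (metis Reals_cnj_iff complex_is_Real_iff of_real_Re)
  qed
  interpret m: map_poly_inj_idom_hom complex_of_real ..
  define es where "es = map Re as"
  have mp: "map_poly complex_of_real (\<Prod>e\<leftarrow>es. [:- e, 1:]) = (\<Prod>a\<leftarrow>as. [:- a, 1:])"
    unfolding es_def using real
  proof (induction as)
    case Nil then show ?case by simp
  next
    case (Cons a as)
    have "map_poly complex_of_real (\<Prod>e\<leftarrow>map Re (a # as). [:- e, 1:]) =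
          map_poly complex_of_real [:- Re a, 1:] * map_poly complex_of_real (\<Prod>e\<leftarrow>map Re as. [:- e, 1:])"
    proof -
      have "(\<Prod>e\<leftarrow>map Re (a # as). [:- e, 1:]) = [:- Re a, 1:] * (\<Prod>e\<leftarrow>map Re as. [:- e, 1:])"
        by simp
      then show ?thesis by (simp only: m.hom_mult)
    qed
    also have "map_poly complex_of_real [:- Re a, 1:] = [:- a, 1:]" using Cons(2)[of a] by simp
    finally show ?case using Cons by simp
  qed
  then have "map_poly complex_of_real (char_poly G) = map_poly complex_of_real (\<Prod>e\<leftarrow>es. [:- e, 1:])"
  proof -
    have "char_poly (map_mat complex_of_real G) = map_poly complex_of_real (char_poly G)"
      by (rule of_real_hom.char_poly_hom[OF G])
    then show ?thesis using cp mp by (simp only:)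
  qed
  then have "char_poly G = (\<Prod>e\<leftarrow>es. [:- e, 1:])" by (rule m.injectivity)
  then show ?thesis using len unfolding es_def by (intro exI[of _ "map Re as"]) simp
qed




lemma proots_linear_prod: "proots (\<Prod>e\<leftarrow>es. [:- (e::real), 1:]) = mset es"
proof (induction es)
  case Nil then show ?case by simp
next
  case (Cons a es)
  have ne: "(\<Prod>e\<leftarrow>es. [:- (e::real), 1:]) \<noteq> 0" by (auto simp: prod_list_zero_iff)
  have "proots ([:- a, 1:] * (\<Prod>e\<leftarrow>es. [:- e, 1:])) = proots [:- a, 1:] + proots (\<Prod>e\<leftarrow>es. [:- e, 1:])"
    by (rule proots_mult) (use ne in auto)
  also have "proots [:- a, 1:] = {#a#}" using proots_linear_factor[of "- a"] by simp
  finally show ?case using Cons by simp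
qed

lemma sigma_zero:
  fixes X :: "real mat"
  assumes X: "X \<in> carrier_mat n r" and r: "0 < r" and d: "det (transpose_mat X * X) = 0"
  shows "sigma r X = 0"
proof -
  define G where "G = transpose_mat X * X"
  have XT: "transpose_mat X \<in> carrier_mat r n" using X by auto
  have G: "G \<in> carrier_mat r r" using X unfolding G_def by auto
  have GT: "transpose_mat G = G" unfolding G_def using transpose_mult[OF XT X] by simp
  obtain es where cp: "char_poly G = (\<Prod>e\<leftarrow>es. [:- e, 1:])" and len: "length es = r"
    using sym_char_poly_split[OF G GT] by blast
  have nonneg: "e \<ge> 0" if e: "e \<in> set es" for e
  proof -
    have "poly (char_poly G) e = 0" unfolding cp using e by (rule linear_poly_root)
    then have "eigenvalue G e" using eigenvalue_root_char_poly[OF G] by simp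
    then obtain v where v: "v \<in> carrier_vec r" and v0: "v \<noteq> 0\<^sub>v r" and Gv: "G *\<^sub>v v = e \<cdot>\<^sub>v v"
      using G unfolding eigenvalue_def eigenvector_def by auto
    have Xv: "X *\<^sub>v v \<in> carrier_vec n" using X v by auto
    have "(G *\<^sub>v v) \<bullet> v = (transpose_mat X *\<^sub>v (X *\<^sub>v v)) \<bullet> v"
      unfolding G_def using assoc_mult_mat_vec[OF XT X v] by simp
    also have "\<dots> = (X *\<^sub>v v) \<bullet> (X *\<^sub>v v)" by (rule transpose_vec_mult_scalar[OF X v Xv])
    moreover have "(X *\<^sub>v v) \<bullet> (X *\<^sub>v v) \<ge> 0" by (simp add: scalar_prod_def sum_nonneg)
    ultimately have "(G *\<^sub>v v) \<bullet> v \<ge> 0" by simp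
    then have "e * (v \<bullet> v) \<ge> 0" using Gv v by simp
    moreover have "v \<bullet> v > 0"
    proof -
      have "v \<bullet> v \<noteq> 0"
      proof
        assume "v \<bullet> v = 0"
        then have "(\<Sum>i\<in>{0..<r}. v $ i * v $ i) = 0" using v by (simp add: scalar_prod_def)
        then have "\<forall>i\<in>{0..<r}. v $ i * v $ i = 0" by (subst (asm) sum_nonneg_eq_0_iff) auto
        then have "v = 0\<^sub>v r" using v by (intro eq_vecI) auto
        then show False using v0 by simp
      qed
      moreover have "v \<bullet> v \<ge> 0" by (simp add: scalar_prod_def sum_nonneg)
      ultimately show ?thesis by simp
    qed
    ultimately show ?thesis by (simp add: zero_le_mult_iff)
  qed
  have zero_in: "0 \<in> set es"
  proof -
    obtain v where v: "v \<in> carrier_vec r" and v0: "v \<noteq> 0\<^sub>v r" and Gv: "G *\<^sub>v v = 0\<^sub>v r"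
      using det_0_iff_vec_prod_zero[OF G] d unfolding G_def by auto
    have "G *\<^sub>v v = 0 \<cdot>\<^sub>v v" using Gv v by (auto intro!: eq_vecI)
    then have "eigenvalue G 0" unfolding eigenvalue_def eigenvector_def using v v0 G by auto
    then have "poly (char_poly G) 0 = 0" using eigenvalue_root_char_poly[OF G] by simp
    then have "poly (\<Prod>e\<leftarrow>es. [:- e, 1:]) 0 = 0" using cp by simp
    then show ?thesis by (auto simp: poly_prod_list_zero_iff)
  qed
  have sv: "singular_values X = map sqrt (rev (sort es))"
    unfolding singular_values_def G_def[symmetric] cp proots_linear_prod by simp
  have ls: "length (sort es) = r" using len by simp
  have "sigma r X = sqrt (rev (sort es) ! (r - 1))"
    unfolding sigma_def sv using ls r by simp
  also have "rev (sort es) ! (r - 1) = sort es ! 0" using ls r by (simp add: rev_nth)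
  also have "sort es ! 0 = 0"
  proof -
    have "0 \<in> set (sort es)" using zero_in by simp
    then obtain k where k: "k < r" and sk: "sort es ! k = 0" using ls by (metis in_set_conv_nth)
    have "sort es ! 0 \<le> sort es ! k" using k ls by (intro sorted_nth_mono) auto
    moreover have "sort es ! 0 \<in> set es" using ls r by (metis nth_mem set_sort)
    ultimately show ?thesis using sk nonneg by force
  qed
  finally show ?thesis by simp
qed




theorem lemma12:
  fixes X Z J :: "real mat" and n r :: nat
  assumes X: "X \<in> carrier_mat n r"
    and Z: "Z \<in> carrier_mat n r"
    and J: "J \<in> carrier_mat (n * n) (n * r)"
    and J_def: "\<forall>Y \<in> carrier_mat n r.
                  J *\<^sub>v vecm Y = vecm (X * transpose_mat Y + Y * transpose_mat X)"
    and pinv0: "mp_pinv J *\<^sub>v vecm (X * transpose_mat X - Z * transpose_mat Z) = 0\<^sub>v (n * r)"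
  shows "X * transpose_mat X = Z * transpose_mat Z \<or> sigma r X = 0"
proof (cases "r = 0")
  case True
  have "X * transpose_mat X = Z * transpose_mat Z"
    by (rule eq_matI) (use X Z True in \<open>auto simp: scalar_prod_def\<close>)
  then show ?thesis ..
next
  case False
  show ?thesis
  proof (cases "det (transpose_mat X * X) = 0")
    case True
    then show ?thesis using sigma_zero[OF X] False by simp
  next
    case dG: False
    define E where "E = X * transpose_mat X - Z * transpose_mat Z"
    have XT: "transpose_mat X \<in> carrier_mat r n" using X by auto
    have ZT: "transpose_mat Z \<in> carrier_mat r n" using Z by auto
    have E: "E \<in> carrier_mat n n" unfolding E_def using X Z by auto
    have ET: "transpose_mat E = E" unfolding E_def
      using X Z by (simp add: transpose_minus[of _ n n] transpose_mult[OF X XT] transpose_mult[OF Z ZT])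
    have e: "vecm E \<in> carrier_vec (n * n)" by (rule vecm_carrier[OF E])
    have JTe: "transpose_mat J *\<^sub>v vecm E = 0\<^sub>v (n * r)"
      by (rule mp_null[OF J e]) (use pinv0 in \<open>simp add: E_def\<close>)
    define Y where "Y = E * X"
    have Y: "Y \<in> carrier_mat n r" unfolding Y_def using E X by auto
    have vY: "vecm Y \<in> carrier_vec (n * r)" by (rule vecm_carrier[OF Y])
    have "0 = (transpose_mat J *\<^sub>v vecm E) \<bullet> vecm Y" using JTe vY by simp
    also have "\<dots> = vecm E \<bullet> (J *\<^sub>v vecm Y)" by (rule transpose_vec_mult_scalar[OF J vY e])
    also have "\<dots> = vecm E \<bullet> vecm (X * transpose_mat Y + Y * transpose_mat X)" using J_def Y by simp
    also have "\<dots> = 2 * (\<Sum>i\<in>{0..<n}. \<Sum>l\<in>{0..<r}. Y $$ (i,l) * Y $$ (i,l))"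
      unfolding Y_def by (rule frob_key[OF E X ET])
    finally have "(\<Sum>i\<in>{0..<n}. \<Sum>l\<in>{0..<r}. Y $$ (i,l) * Y $$ (i,l)) = 0" by simp
    then have "Y = 0\<^sub>m n r" by (rule sumsq_zero_mat[OF Y])
    then have "X * transpose_mat X = Z * transpose_mat Z"
      by (intro fullrank_eq[OF X Z _ dG]) (simp add: Y_def E_def)
    then show ?thesis ..
  qed
qed



end
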